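(* In the setting described in the context, let $p>0$ and $q=\max\{2,p+1\}$, and assume $\sup_{n\geq1}\mathbb{E}[(B^{(n)})^q]<\infty$. Then \[ \limsup_{n\to\infty}(1-\rho^{(n)})^p\,\mathbb{E}[(W^{(n)})^p]<\infty. \]
   Context: For each $n\geq1$: a single-server queue with unit service speed; i.i.d. interarrival times $A^{(n)}_i$ and i.i.d. job sizes $B^{(n)}_i$ (independent, positive), $A^{(n)}=A^{(n)}_1$, $B^{(n)}=B^{(n)}_1$, load $\rho^{(n)}=\mathbb{E}[B^{(n)}]/\mathbb{E}[A^{(n)}]$. Standing assumptions: constants $\rho_0\in(0,1)$, $A_{\min}>0$ independent of $n$ with $\rho_0A_{\min}\leq\rho_0\mathbb{E}[A^{(n)}]\leq\mathbb{E}[B^{(n)}]<\mathbb{E}[A^{(n)}]$; $\rho^{(n)}\to1$; $A^{(n)}$ has finite variance and $\limsup_n\mathbb{E}[(A^{(n)})^2]<\infty$; constants $\delta,\gamma>0$ independent of $n$ with $\mathbb{P}(B^{(n)}-A^{(n)}\geq\delta)\geq\gamma$. $W^{(n)}$ is the steady-state total amount of work in the system seen by an arriving job; equivalently $W^{(n)}$ has the distribution of $\sup_{m\geq0}\sum_{i=1}^m(B^{(n)}_i-A^{(n)}_i)$ (empty sum $=0$). *)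

theory Defs
  imports "HOL-Probability.Probability"
begin

text \<open>Workload seen by an arriving job, as the supremum of the random walk
  with increments B i - A i (empty sum = 0), taking values in [0, infinity].\<close>
definition workload :: "(nat \<Rightarrow> 'a \<Rightarrow> real) \<Rightarrow> (nat \<Rightarrow> 'a \<Rightarrow> real) \<Rightarrow> 'a \<Rightarrow> ennreal" where
  "workload B A \<omega> = (SUP m. ennreal (\<Sum>i<m. B i \<omega> - A i \<omega>))"

definition enn_powr :: "ennreal \<Rightarrow> real \<Rightarrow> ennreal" where
  "enn_powr x p = (if x = \<top> then \<top> else ennreal (enn2real x powr p))"

end

theory Submission
  imports Defs
begin

lemma powr_tangent:
  fixes s t a :: real
  assumes "0 < s" "0 < t" "a \<ge> 1"
  shows "t powr a - s powr a \<ge> a * s powr (a - 1) * (t - s)"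
proof -
  have "convex_on {0<..} (\<lambda>x::real. x powr a)" by (rule powr_convex[OF assms(3)])
  moreover have "((\<lambda>x::real. x powr a) has_field_derivative a * s powr (a - 1)) (at s within {0<..})"
    using assms by (auto intro!: derivative_eq_intros)
  ultimately show ?thesis
    using convex_on_imp_above_tangent[of "{0<..}" "\<lambda>x. x powr a" s t "a * s powr (a - 1)"] assms
    by (auto simp: interior_open)
qed

lemma powr_diff_upper:
  fixes s t a :: real
  assumes "0 \<le> s" "s \<le> t" "a \<ge> 1"
  shows "t powr a - s powr a \<le> a * t powr (a - 1) * (t - s)"
proof (cases "s = 0")
  case True
  show ?thesis
  proof (cases "t = 0")
    case False
    with assms have "t > 0" by auto
    have "t powr a = t powr (a - 1) * t" using \<open>t>0\<close> by (simp add: powr_diff)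
    moreover have "t powr (a - 1) * t \<le> a * t powr (a - 1) * t"
      using \<open>t>0\<close> assms by (intro mult_right_mono) (auto intro!: mult_left_le_one_le simp: mult_le_cancel_right1)
    ultimately show ?thesis using True \<open>a\<ge>1\<close> by auto
  qed (use True in auto)
next
  case False
  then have "s > 0" "t > 0" using assms by auto
  from powr_tangent[OF \<open>t>0\<close> \<open>s>0\<close> assms(3)] show ?thesis by (auto simp: algebra_simps)
qed

lemma powr_diff_lower:
  fixes s t a :: real
  assumes "0 \<le> s" "s \<le> t" "a \<ge> 1"
  shows "a * s powr (a - 1) * (t - s) \<le> t powr a - s powr a"
proof (cases "s = 0")
  case True
  then show ?thesis using assms by auto
next
  case False
  then have "s > 0" "t > 0" using assms by auto
  from powr_tangent[OF \<open>s>0\<close> \<open>t>0\<close> assms(3)] show ?thesis by (auto simp: algebra_simps)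
qed

lemma key_ineq:
  fixes w x r :: real
  assumes r: "r \<ge> 2" and w: "w \<ge> 0"
  shows "(max 0 (w + x)) powr r \<le> w powr r + r * w powr (r - 1) * x
           + (r * r * 2 powr r) * (x\<^sup>2 * w powr (r - 2) + (max 0 x) powr r)"
proof -
  define C where "C = r * r * 2 powr r"
  have C1: "r * (r - 1) \<le> C"
  proof -
    have "r * (r - 1) \<le> r * r" using r by auto
    also have "\<dots> \<le> r * r * 2 powr r"
    proof -
      have "1 \<le> (2::real) powr r" using r by (intro ge_one_powr_ge_zero) auto
      then show ?thesis using r by (simp add: mult_le_cancel_left1)
    qed
    finally show ?thesis by (simp add: C_def)
  qed
  have C2: "r \<le> C" using C1 r by (smt (verit) mult_le_cancel_left1)
  have Cpos: "C \<ge> 0" using C2 r by auto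
  have R0: "0 \<le> C * (max 0 x) powr r" using Cpos by auto
  consider "x \<le> 0" "0 \<le> w + x" | "w + x < 0" | "x > 0" by linarith
  then show ?thesis
  proof cases
    case 1
    define u where "u = w + x"
    have u: "0 \<le> u" "u \<le> w" using 1 by (auto simp: u_def)
    have l: "r * u powr (r - 1) * (w - u) \<le> w powr r - u powr r"
      using powr_diff_lower[OF u, of r] r by auto
    have up: "w powr (r - 1) - u powr (r - 1) \<le> (r - 1) * w powr (r - 1 - 1) * (w - u)"
      using powr_diff_upper[OF u, of "r - 1"] r by auto
    have "r * (w powr (r - 1) - (r - 1) * w powr (r - 2) * (w - u)) * (w - u)
          \<le> r * u powr (r - 1) * (w - u)"
      using up u r by (intro mult_right_mono mult_left_mono) (auto simp: diff_diff_eq)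
    then have "u powr r \<le> w powr r + r * w powr (r - 1) * x + r * (r - 1) * (x\<^sup>2 * w powr (r - 2))"
      using l by (simp add: u_def power2_eq_square algebra_simps)
    also have "\<dots> \<le> w powr r + r * w powr (r - 1) * x + C * (x\<^sup>2 * w powr (r - 2))"
      using C1 by (intro add_left_mono mult_right_mono) auto
    finally show ?thesis using R0 1 by (simp add: u_def C_def[symmetric] distrib_left)
  next
    case 2
    have "0 \<le> w powr r + r * w powr (r - 1) * x + C * (x\<^sup>2 * w powr (r - 2))"
    proof (cases "w = 0")
      case True then show ?thesis by simp
    next
      case False
      then have wp: "w > 0" using w by auto
      have e: "w powr (r - 1) = w powr (r - 2) * w"
      proof -
        have "w powr (r - 1) = w powr ((r - 2) + 1)" by simp
        also have "\<dots> = w powr (r - 2) * w powr 1" by (rule powr_add)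
        finally show ?thesis using wp by simp
      qed
      have "r * w powr (r - 2) * (w * (-x)) \<le> r * w powr (r - 2) * (x * x)"
      proof -
        have "w * (-x) \<le> (-x) * (-x)" using 2 wp by (intro mult_right_mono) auto
        then show ?thesis using wp r by (intro mult_left_mono) auto
      qed
      moreover have "r * w powr (r - 2) * (x * x) \<le> C * (x * x * w powr (r - 2))"
        using C2 by (simp add: mult.commute mult.left_commute mult_right_mono)
      ultimately show ?thesis using e by (simp add: power2_eq_square algebra_simps)
    qed
    then show ?thesis using 2 R0 by (simp add: C_def[symmetric] distrib_left)
  next
    case 3
    define v where "v = w + x"
    have v: "0 \<le> w" "w \<le> v" using 3 w by (auto simp: v_def)
    have up1: "v powr r - w powr r \<le> r * v powr (r - 1) * (v - w)"
      using powr_diff_upper[OF v, of r] r by auto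
    have up2: "v powr (r - 1) - w powr (r - 1) \<le> (r - 1) * v powr (r - 1 - 1) * (v - w)"
      using powr_diff_upper[OF v, of "r - 1"] r by auto
    have "r * v powr (r - 1) * x \<le> r * (w powr (r - 1) + (r - 1) * v powr (r - 2) * x) * x"
      using up2 3 r by (intro mult_right_mono mult_left_mono) (auto simp: v_def diff_diff_eq)
    then have s1: "v powr r \<le> w powr r + r * w powr (r - 1) * x + r * (r - 1) * (v powr (r - 2) * x\<^sup>2)"
      using up1 by (simp add: v_def power2_eq_square algebra_simps)
    have vb: "v powr (r - 2) \<le> 2 powr r * (w powr (r - 2) + x powr (r - 2))"
    proof -
      have "v \<le> 2 * max w x" using v_def by auto
      then have "v powr (r - 2) \<le> (2 * max w x) powr (r - 2)"
        using r v 3 by (intro powr_mono2) auto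
      also have "\<dots> = 2 powr (r - 2) * max w x powr (r - 2)"
        using w 3 by (simp add: powr_mult)
      also have "\<dots> \<le> 2 powr r * (w powr (r - 2) + x powr (r - 2))"
      proof (rule mult_mono)
        show "2 powr (r - 2) \<le> 2 powr r" by (intro powr_mono) auto
        show "max w x powr (r - 2) \<le> w powr (r - 2) + x powr (r - 2)"
          by (cases "w \<le> x") (auto simp: max_def)
      qed auto
      finally show ?thesis .
    qed
    have xr: "x powr (r - 2) * x\<^sup>2 = x powr r"
    proof -
      have "x powr r = x powr ((r - 2) + 2)" by simp
      also have "\<dots> = x powr (r - 2) * x powr 2" by (rule powr_add)
      finally show ?thesis using 3 by (simp add: powr_numeral)
    qed
    have "r * (r - 1) * (v powr (r - 2) * x\<^sup>2) \<le> r * (r - 1) * (2 powr r * (w powr (r - 2) + x powr (r - 2)) * x\<^sup>2)"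
      using vb r by (intro mult_left_mono mult_right_mono) auto
    also have "\<dots> = (r * (r - 1) * 2 powr r) * (x\<^sup>2 * w powr (r - 2) + x powr r)"
      unfolding xr[symmetric] by (simp add: algebra_simps)
    also have "\<dots> \<le> C * (x\<^sup>2 * w powr (r - 2) + x powr r)"
      unfolding C_def using r by (intro mult_right_mono) (auto intro!: mult_right_mono)
    finally have "v powr r \<le> w powr r + r * w powr (r - 1) * x + C * (x\<^sup>2 * w powr (r - 2) + x powr r)"
      using s1 by linarith
    moreover have "max 0 (w + x) = v" "max 0 x = x" using 3 w by (auto simp: v_def)
    ultimately show ?thesis by (simp add: C_def)
  qed
qed

lemma powr_split_bound:
  fixes w l p a :: real
  assumes w: "w \<ge> 0" and l: "l > 0" and p: "0 \<le> p" "p \<le> a"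
  shows "w powr p \<le> l powr (p - a) * w powr a + l powr p"
proof (cases "w \<ge> l")
  case True
  then have wp: "w > 0" using l by auto
  have "w powr p = w powr (p - a) * w powr a" by (simp add: powr_add[symmetric])
  also have "\<dots> \<le> l powr (p - a) * w powr a"
    using True l p by (intro mult_right_mono powr_mono2') auto
  finally show ?thesis using powr_ge_zero[of l p] by linarith
next
  case False
  then have "w powr p \<le> l powr p" using w p by (intro powr_mono2) auto
  moreover have "0 \<le> l powr (p - a) * w powr a" by simp
  ultimately show ?thesis by linarith
qed

fun Fw :: "nat \<Rightarrow> (nat \<Rightarrow> real) \<Rightarrow> real" where
  "Fw 0 x = 0"
| "Fw (Suc N) x = max 0 (x 0 + Fw N (\<lambda>i. x (Suc i)))"

lemma Fw_nonneg: "Fw N x \<ge> 0"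
  by (cases N) auto

lemma Fw_cong: "(\<And>i. i < N \<Longrightarrow> x i = y i) \<Longrightarrow> Fw N x = Fw N y"
proof (induction N arbitrary: x y)
  case (Suc N)
  have "Fw N (\<lambda>i. x (Suc i)) = Fw N (\<lambda>i. y (Suc i))" by (rule Suc.IH) (use Suc.prems in simp)
  moreover have "x 0 = y 0" using Suc.prems by simp
  ultimately show ?case by simp
qed simp

lemma Fw_ge: "m \<le> N \<Longrightarrow> (\<Sum>i<m. x i) \<le> Fw N x"
proof (induction N arbitrary: x m)
  case 0 then show ?case by simp
next
  case (Suc N)
  show ?case
  proof (cases m)
    case 0 then show ?thesis by simp
  next
    case (Suc m')
    then have "(\<Sum>i<m. x i) = x 0 + (\<Sum>i<m'. x (Suc i))"
      by (simp only: sum.lessThan_Suc_shift)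
    also have "\<dots> \<le> x 0 + Fw N (\<lambda>i. x (Suc i))"
      using Suc.IH[of m' "\<lambda>i. x (Suc i)"] Suc.prems Suc by auto
    finally show ?thesis by simp
  qed
qed

lemma Fw_eq: "\<exists>m\<le>N. Fw N x = (\<Sum>i<m. x i)"
proof (induction N arbitrary: x)
  case 0 then show ?case by simp
next
  case (Suc N)
  obtain m where m: "m \<le> N" "Fw N (\<lambda>i. x (Suc i)) = (\<Sum>i<m. x (Suc i))"
    using Suc.IH by blast
  show ?case
  proof (cases "x 0 + Fw N (\<lambda>i. x (Suc i)) \<ge> 0")
    case True
    then show ?thesis using m
      by (intro exI[of _ "Suc m"]) (auto simp del: sum.lessThan_Suc simp: sum.lessThan_Suc_shift)
  next
    case False
    then show ?thesis by (intro exI[of _ 0]) auto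
  qed
qed

lemma Fw_mono: "Fw N x \<le> Fw (Suc N) x"
proof -
  obtain m where m: "m \<le> N" "Fw N x = (\<Sum>i<m. x i)" using Fw_eq by blast
  have "m \<le> Suc N" using m by simp
  from Fw_ge[OF this, of x] m show ?thesis by simp
qed

lemma Fw_le_pos: "Fw N x \<le> (\<Sum>i<N. max 0 (x i))"
proof -
  obtain m where m: "m \<le> N" "Fw N x = (\<Sum>i<m. x i)" using Fw_eq by blast
  have "(\<Sum>i<m. x i) \<le> (\<Sum>i<m. max 0 (x i))" by (intro sum_mono) auto
  also have "\<dots> \<le> (\<Sum>i<N. max 0 (x i))" using m by (intro sum_mono2) auto
  finally show ?thesis using m by simp
qed

lemma Fw_meas:
  "UNIV \<times> {k..<N + k} \<subseteq> I \<Longrightarrow>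
   (\<lambda>y. Fw N (\<lambda>i. y (False, i + k) - y (True, i + k))) \<in> borel_measurable (PiM I (\<lambda>_. borel :: real measure))"
proof (induction N arbitrary: k)
  case 0 then show ?case by simp
next
  case (Suc N)
  have IH: "(\<lambda>y. Fw N (\<lambda>i. y (False, i + Suc k) - y (True, i + Suc k))) \<in> borel_measurable (PiM I (\<lambda>_. borel :: real measure))"
  proof (rule Suc.IH, rule order_trans[OF _ Suc.prems])
    show "UNIV \<times> {Suc k..<N + Suc k} \<subseteq> UNIV \<times> {k..<Suc N + k}" by auto
  qed
  have k: "(False, k) \<in> I" "(True, k) \<in> I" by (rule subsetD[OF Suc.prems], simp)+
  have eq: "(\<lambda>y. Fw (Suc N) (\<lambda>i. y (False, i + k) - y (True, i + k))) =
        (\<lambda>y. max 0 ((y (False, k) - y (True, k)) + Fw N (\<lambda>i. y (False, i + Suc k) - y (True, i + Suc k))))"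
    by simp
  have m: "(\<lambda>y. max 0 ((y (False, k) - y (True, k)) + Fw N (\<lambda>i. y (False, i + Suc k) - y (True, i + Suc k)))) \<in> borel_measurable (PiM I (\<lambda>_. borel :: real measure))"
  proof -
    have c1: "(\<lambda>y. y (False, k)) \<in> borel_measurable (PiM I (\<lambda>_. borel :: real measure))"
      by (rule measurable_component_singleton) (use k in auto)
    have c2: "(\<lambda>y. y (True, k)) \<in> borel_measurable (PiM I (\<lambda>_. borel :: real measure))"
      by (rule measurable_component_singleton) (use k in auto)
    have "(\<lambda>y. (y (False, k) - y (True, k)) + Fw N (\<lambda>i. y (False, i + Suc k) - y (True, i + Suc k))) \<in> borel_measurable (PiM I (\<lambda>_. borel :: real measure))"
      using IH c1 c2 by (intro borel_measurable_add borel_measurable_diff)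
    then show ?thesis by (intro borel_measurable_max) auto
  qed
  show ?case unfolding eq by (rule m)
qed

definition Xv :: "(bool \<times> nat \<Rightarrow> 'a \<Rightarrow> real) \<Rightarrow> nat \<Rightarrow> 'a \<Rightarrow> real" where
  "Xv Z i \<omega> = Z (False, i) \<omega> - Z (True, i) \<omega>"

definition Gk :: "nat \<Rightarrow> nat \<Rightarrow> (bool \<times> nat \<Rightarrow> real) \<Rightarrow> real" where
  "Gk N k y = Fw N (\<lambda>i. y (False, i + k) - y (True, i + k))"

lemma Gk_meas: "UNIV \<times> {k..<N + k} \<subseteq> I \<Longrightarrow> Gk N k \<in> borel_measurable (PiM I (\<lambda>_. borel :: real measure))"
  unfolding Gk_def by (rule Fw_meas)

context
  fixes M :: "'a measure" and Z :: "bool \<times> nat \<Rightarrow> 'a \<Rightarrow> real"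
  assumes M: "prob_space M"
    and indZ: "prob_space.indep_vars M (\<lambda>_. borel) Z UNIV"
    and Zid: "\<And>b i. distr M borel (Z (b, i)) = distr M borel (Z (b, 0))"
begin

interpretation prob_space M by (rule M)

lemma rvZ[measurable]: "Z j \<in> borel_measurable M"
  using indZ unfolding indep_vars_def by (cases j) auto

lemma rvX[measurable]: "Xv Z i \<in> borel_measurable M"
  unfolding Xv_def[abs_def] by measurable

lemma shift_distr:
  assumes N: "N > 0"
  shows "distr M borel (\<lambda>\<omega>. Fw N (\<lambda>i. Xv Z (i + k) \<omega>)) =
         distr (PiM (UNIV \<times> {..<N}) (\<lambda>j. distr M borel (Z j))) borel (Gk N 0)"
proof -
  define K where "K = (UNIV :: bool set) \<times> {k..<N + k}"
  define K0 where "K0 = (UNIV :: bool set) \<times> {..<N}"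
  define Mz where "Mz j = distr M borel (Z j)" for j
  define f where "f = (\<lambda>(b::bool, i::nat). (b, i + k))"
  have Kne: "K \<noteq> {}" using N by (auto simp: K_def)
  have setsMz: "sets (Mz j) = sets borel" for j by (simp add: Mz_def)
  have setsK: "sets (PiM K Mz) = sets (PiM K (\<lambda>_. borel :: real measure))"
    by (rule sets_PiM_cong) (auto simp: setsMz)
  have setsK0: "sets (PiM K0 Mz) = sets (PiM K0 (\<lambda>_. borel :: real measure))"
    by (rule sets_PiM_cong) (auto simp: setsMz)
  have probMz: "prob_space (Mz j)" for j unfolding Mz_def by (rule prob_space_distr) simp
  have D1: "distr M (PiM K (\<lambda>_. borel)) (\<lambda>\<omega>. \<lambda>j\<in>K. Z j \<omega>) = PiM K Mz"
    unfolding Mz_def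
    by (rule indep_vars_iff_distr_eq_PiM'[THEN iffD1, OF Kne]) (auto intro: indep_vars_subset[OF indZ])
  have vec_meas: "(\<lambda>\<omega>. \<lambda>j\<in>K. Z j \<omega>) \<in> measurable M (PiM K (\<lambda>_. borel))"
    by (rule measurable_restrict) simp
  have GKm: "Gk N k \<in> borel_measurable (PiM K (\<lambda>_. borel :: real measure))"
    by (rule Gk_meas) (simp add: K_def)
  have G0m: "Gk N 0 \<in> borel_measurable (PiM K0 (\<lambda>_. borel :: real measure))"
    by (rule Gk_meas) (auto simp: K0_def)
  have eq1: "(\<lambda>\<omega>. Fw N (\<lambda>i. Xv Z (i + k) \<omega>)) = Gk N k \<circ> (\<lambda>\<omega>. \<lambda>j\<in>K. Z j \<omega>)"
    by (rule ext) (auto simp: Gk_def Xv_def K_def intro!: Fw_cong)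
  have "distr M borel (\<lambda>\<omega>. Fw N (\<lambda>i. Xv Z (i + k) \<omega>)) = distr (PiM K Mz) borel (Gk N k)"
    unfolding eq1 D1[symmetric] by (rule distr_distr[symmetric, OF GKm vec_meas])
  also have "\<dots> = distr (PiM K Mz) borel (Gk N 0 \<circ> (\<lambda>\<omega>. \<lambda>n\<in>K0. \<omega> (f n)))"
    by (rule distr_cong) (auto simp: Gk_def f_def K0_def intro!: Fw_cong)
  also have "\<dots> = distr (distr (PiM K Mz) (PiM K0 (\<lambda>j. Mz (f j))) (\<lambda>\<omega>. \<lambda>n\<in>K0. \<omega> (f n))) borel (Gk N 0)"
  proof (rule distr_distr[symmetric])
    have "sets (PiM K0 (\<lambda>j. Mz (f j))) = sets (PiM K0 (\<lambda>_. borel :: real measure))"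
      by (rule sets_PiM_cong) (auto simp: setsMz)
    then show "Gk N 0 \<in> borel_measurable (PiM K0 (\<lambda>j. Mz (f j)))"
      using G0m measurable_cong_sets by blast
    show "(\<lambda>\<omega>. \<lambda>n\<in>K0. \<omega> (f n)) \<in> measurable (PiM K Mz) (PiM K0 (\<lambda>j. Mz (f j)))"
      by (rule measurable_restrict, rule measurable_component_singleton)
         (auto simp: f_def K_def K0_def)
  qed
  also have "distr (PiM K Mz) (PiM K0 (\<lambda>j. Mz (f j))) (\<lambda>\<omega>. \<lambda>n\<in>K0. \<omega> (f n)) = PiM K0 (\<lambda>j. Mz (f j))"
  proof (rule distr_PiM_reindex)
    show "inj_on f K0" by (auto simp: inj_on_def f_def)
    show "f \<in> K0 \<rightarrow> K" by (auto simp: f_def K_def K0_def)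
  qed (rule probMz)
  also have "PiM K0 (\<lambda>j. Mz (f j)) = PiM K0 Mz"
  proof (rule PiM_cong)
    fix j assume "j \<in> K0"
    obtain b i where j: "j = (b, i)" by (cases j)
    show "Mz (f j) = Mz j" unfolding j f_def Mz_def
      by (simp add: Zid[of b "i + k"] Zid[of b i])
  qed simp
  finally show ?thesis unfolding Mz_def K0_def .
qed

lemma shift_distr2:
  "distr M borel (\<lambda>\<omega>. Fw N (\<lambda>i. Xv Z (i + k) \<omega>)) = distr M borel (\<lambda>\<omega>. Fw N (\<lambda>i. Xv Z i \<omega>))"
proof (cases "N = 0")
  case True then show ?thesis by simp
next
  case False
  then show ?thesis using shift_distr[of N k] shift_distr[of N 0] by simp
qed

end

lemma sum_powr_bound:
  fixes y :: "nat \<Rightarrow> real" and r :: real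
  assumes y: "\<And>i. y i \<ge> 0" and r: "r > 0"
  shows "(\<Sum>i<N. y i) powr r \<le> real N powr r * (\<Sum>i<N. y i powr r)"
proof (cases "N = 0")
  case True then show ?thesis by simp
next
  case False
  define m where "m = Max (y ` {..<N})"
  have "m \<in> y ` {..<N}" unfolding m_def using False by (intro Max_in) auto
  then obtain j where j: "j < N" "m = y j" by auto
  have "(\<Sum>i<N. y i) \<le> (\<Sum>i<N. m)" unfolding m_def by (intro sum_mono) auto
  also have "\<dots> = real N * m" by simp
  finally have "(\<Sum>i<N. y i) powr r \<le> (real N * m) powr r"
    using y r by (intro powr_mono2) (auto intro: sum_nonneg)
  also have "\<dots> = real N powr r * m powr r" using j y by (simp add: powr_mult)
  also have "\<dots> \<le> real N powr r * (\<Sum>i<N. y i powr r)"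
    using j by (intro mult_left_mono) (auto intro!: member_le_sum[of j "{..<N}" "\<lambda>i. y i powr r"])
  finally show ?thesis .
qed

context
  fixes M :: "'a measure" and Z :: "bool \<times> nat \<Rightarrow> 'a \<Rightarrow> real"
  assumes M: "prob_space M"
    and indZ: "prob_space.indep_vars M (\<lambda>_. borel) Z UNIV"
    and Zid: "\<And>b i. distr M borel (Z (b, i)) = distr M borel (Z (b, 0))"
begin

interpretation prob_space M by (rule M)

lemmas rvZ' = rvZ[OF M indZ Zid]
lemmas rvX' [measurable] = rvX[OF M indZ Zid]
lemmas shift' = shift_distr2[OF M indZ Zid]

lemma V_meas[measurable]: "(\<lambda>\<omega>. Fw N (\<lambda>i. Xv Z (i + k) \<omega>)) \<in> borel_measurable M"
proof -
  define K where "K = (UNIV :: bool set) \<times> {k..<N + k}"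
  have "(\<lambda>\<omega>. Fw N (\<lambda>i. Xv Z (i + k) \<omega>)) = Gk N k \<circ> (\<lambda>\<omega>. \<lambda>j\<in>K. Z j \<omega>)"
    by (rule ext) (auto simp: Gk_def Xv_def K_def intro!: Fw_cong)
  also have "\<dots> \<in> borel_measurable M"
  proof (rule measurable_comp)
    show "(\<lambda>\<omega>. \<lambda>j\<in>K. Z j \<omega>) \<in> measurable M (PiM K (\<lambda>_. borel))"
      by (rule measurable_restrict) (simp add: rvZ')
    show "Gk N k \<in> borel_measurable (PiM K (\<lambda>_. borel :: real measure))"
      by (rule Gk_meas) (simp add: K_def)
  qed
  finally show ?thesis .
qed

lemma V_meas0[measurable]: "(\<lambda>\<omega>. Fw N (\<lambda>i. Xv Z i \<omega>)) \<in> borel_measurable M"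
  using V_meas[of N 0] by simp

lemma indep_X0_V1:
  assumes h: "h \<in> borel_measurable borel" and g: "g \<in> borel_measurable borel"
  shows "indep_var borel (\<lambda>\<omega>. h (Xv Z 0 \<omega>)) borel (\<lambda>\<omega>. g (Fw N (\<lambda>i. Xv Z (i + 1) \<omega>)))"
proof -
  define A where "A = (UNIV :: bool set) \<times> {0::nat}"
  define B where "B = (UNIV :: bool set) \<times> {1..<N + 1}"
  have ind: "indep_var (PiM A (\<lambda>_. borel)) (\<lambda>\<omega>. restrict (\<lambda>i. Z i \<omega>) A)
                       (PiM B (\<lambda>_. borel)) (\<lambda>\<omega>. restrict (\<lambda>i. Z i \<omega>) B)"
    by (rule indep_var_restrict[OF indZ]) (auto simp: A_def B_def)
  have m1: "(\<lambda>y. h (y (False, 0) - y (True, 0))) \<in> borel_measurable (PiM A (\<lambda>_. borel :: real measure))"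
  proof -
    have c1: "(\<lambda>y. y (False, 0)) \<in> borel_measurable (PiM A (\<lambda>_. borel :: real measure))"
      by (rule measurable_component_singleton) (simp add: A_def)
    have c2: "(\<lambda>y. y (True, 0)) \<in> borel_measurable (PiM A (\<lambda>_. borel :: real measure))"
      by (rule measurable_component_singleton) (simp add: A_def)
    show ?thesis using c1 c2 h by (intro measurable_compose[OF _ h] borel_measurable_diff)
  qed
  have m2: "(\<lambda>y. g (Gk N 1 y)) \<in> borel_measurable (PiM B (\<lambda>_. borel :: real measure))"
    by (rule measurable_compose[OF _ g], rule Gk_meas) (auto simp: B_def)
  from indep_var_compose[OF ind m1 m2]
  have "indep_var borel ((\<lambda>y. h (y (False, 0) - y (True, 0))) \<circ> (\<lambda>\<omega>. restrict (\<lambda>i. Z i \<omega>) A))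
                   borel ((\<lambda>y. g (Gk N 1 y)) \<circ> (\<lambda>\<omega>. restrict (\<lambda>i. Z i \<omega>) B))" .
  moreover have "((\<lambda>y. h (y (False, 0) - y (True, 0))) \<circ> (\<lambda>\<omega>. restrict (\<lambda>i. Z i \<omega>) A)) = (\<lambda>\<omega>. h (Xv Z 0 \<omega>))"
    by (rule ext) (simp add: A_def Xv_def)
  moreover have "((\<lambda>y. g (Gk N 1 y)) \<circ> (\<lambda>\<omega>. restrict (\<lambda>i. Z i \<omega>) B)) = (\<lambda>\<omega>. g (Fw N (\<lambda>i. Xv Z (i + 1) \<omega>)))"
    by (rule ext) (auto simp: B_def Xv_def Gk_def intro!: arg_cong[where f=g] Fw_cong)
  ultimately show ?thesis by simp
qed

lemma indep_prod:
  fixes h g :: "real \<Rightarrow> real"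
  assumes h: "h \<in> borel_measurable borel" and g: "g \<in> borel_measurable borel"
    and ih: "integrable M (\<lambda>\<omega>. h (Xv Z 0 \<omega>))"
    and ig: "integrable M (\<lambda>\<omega>. g (Fw N (\<lambda>i. Xv Z (i + 1) \<omega>)))"
  shows "integrable M (\<lambda>\<omega>. h (Xv Z 0 \<omega>) * g (Fw N (\<lambda>i. Xv Z (i + 1) \<omega>)))"
    and "(\<integral>\<omega>. h (Xv Z 0 \<omega>) * g (Fw N (\<lambda>i. Xv Z (i + 1) \<omega>)) \<partial>M) =
         (\<integral>\<omega>. h (Xv Z 0 \<omega>) \<partial>M) * (\<integral>\<omega>. g (Fw N (\<lambda>i. Xv Z (i + 1) \<omega>)) \<partial>M)"
  using indep_var_integrable[OF indep_X0_V1[OF h g] ih ig]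
        indep_var_lebesgue_integral[OF indep_X0_V1[OF h g] ih ig] by auto

end

context
  fixes M :: "'a measure" and Z :: "bool \<times> nat \<Rightarrow> 'a \<Rightarrow> real" and r :: real
  assumes M: "prob_space M"
    and indZ: "prob_space.indep_vars M (\<lambda>_. borel) Z UNIV"
    and Zid: "\<And>b i. distr M borel (Z (b, i)) = distr M borel (Z (b, 0))"
    and r: "r \<ge> 2"
    and iX: "integrable M (Xv Z 0)"
    and iX2: "integrable M (\<lambda>\<omega>. (Xv Z 0 \<omega>)\<^sup>2)"
    and iXp: "integrable M (\<lambda>\<omega>. max 0 (Xv Z 0 \<omega>) powr r)"
begin

interpretation prob_space M by (rule M)

lemmas rvX'' [measurable] = rvX[OF M indZ Zid]
lemmas shift'' = shift_distr2[OF M indZ Zid]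
lemmas Vm [measurable] = V_meas[OF M indZ Zid]
lemmas Vm0 [measurable] = V_meas0[OF M indZ Zid]

lemma shift_int:
  assumes g[measurable]: "g \<in> borel_measurable borel"
  shows "integrable M (\<lambda>\<omega>. g (Fw N (\<lambda>i. Xv Z (i + k) \<omega>))) = integrable M (\<lambda>\<omega>. g (Fw N (\<lambda>i. Xv Z i \<omega>)))"
    and "(\<integral>\<omega>. g (Fw N (\<lambda>i. Xv Z (i + k) \<omega>)) \<partial>M) = (\<integral>\<omega>. (g :: real \<Rightarrow> real) (Fw N (\<lambda>i. Xv Z i \<omega>)) \<partial>M)"
proof -
  show "integrable M (\<lambda>\<omega>. g (Fw N (\<lambda>i. Xv Z (i + k) \<omega>))) = integrable M (\<lambda>\<omega>. g (Fw N (\<lambda>i. Xv Z i \<omega>)))"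
    using integrable_distr_eq[OF Vm[of N k] g] integrable_distr_eq[OF Vm0[of N] g] shift''[of N k] by simp
  show "(\<integral>\<omega>. g (Fw N (\<lambda>i. Xv Z (i + k) \<omega>)) \<partial>M) = (\<integral>\<omega>. g (Fw N (\<lambda>i. Xv Z i \<omega>)) \<partial>M)"
    using integral_distr[OF Vm[of N k] g] integral_distr[OF Vm0[of N] g] shift''[of N k] by simp
qed

lemma int_pos_part: "integrable M (\<lambda>\<omega>. max 0 (Xv Z i \<omega>) powr r)"
proof -
  have g: "(\<lambda>t::real. t powr r) \<in> borel_measurable borel" by measurable
  have "integrable M (\<lambda>\<omega>. (Fw 1 (\<lambda>j. Xv Z (j + i) \<omega>)) powr r)"
    using shift_int(1)[OF g, of 1 i] iXp by simp
  then show ?thesis by simp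
qed

lemma int_V: "integrable M (\<lambda>\<omega>. Fw N (\<lambda>i. Xv Z i \<omega>) powr r)"
proof (rule Bochner_Integration.integrable_bound)
  show "integrable M (\<lambda>\<omega>. real N powr r * (\<Sum>i<N. max 0 (Xv Z i \<omega>) powr r))"
    using int_pos_part by auto
  show "(\<lambda>\<omega>. Fw N (\<lambda>i. Xv Z i \<omega>) powr r) \<in> borel_measurable M" by measurable
  show "AE \<omega> in M. norm (Fw N (\<lambda>i. Xv Z i \<omega>) powr r) \<le> norm (real N powr r * (\<Sum>i<N. max 0 (Xv Z i \<omega>) powr r))"
  proof (rule AE_I2)
    fix \<omega>
    have "Fw N (\<lambda>i. Xv Z i \<omega>) powr r \<le> (\<Sum>i<N. max 0 (Xv Z i \<omega>)) powr r"
      using r by (intro powr_mono2 Fw_le_pos Fw_nonneg) auto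
    also have "\<dots> \<le> real N powr r * (\<Sum>i<N. max 0 (Xv Z i \<omega>) powr r)"
      using r by (intro sum_powr_bound) auto
    finally have "Fw N (\<lambda>i. Xv Z i \<omega>) powr r \<le> real N powr r * (\<Sum>i<N. max 0 (Xv Z i \<omega>) powr r)" .
    moreover have "0 \<le> real N powr r * (\<Sum>i<N. max 0 (Xv Z i \<omega>) powr r)"
      by (intro mult_nonneg_nonneg sum_nonneg) auto
    ultimately show "norm (Fw N (\<lambda>i. Xv Z i \<omega>) powr r) \<le> norm (real N powr r * (\<Sum>i<N. max 0 (Xv Z i \<omega>) powr r))"
      by simp
  qed
qed

lemma int_Va:
  assumes a: "0 \<le> a" "a \<le> r"
  shows "integrable M (\<lambda>\<omega>. Fw N (\<lambda>i. Xv Z i \<omega>) powr a)"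
proof (rule Bochner_Integration.integrable_bound)
  show "integrable M (\<lambda>\<omega>. Fw N (\<lambda>i. Xv Z i \<omega>) powr r + 1)"
    using int_V[of N] by auto
  show "(\<lambda>\<omega>. Fw N (\<lambda>i. Xv Z i \<omega>) powr a) \<in> borel_measurable M" by measurable
  show "AE \<omega> in M. norm (Fw N (\<lambda>i. Xv Z i \<omega>) powr a) \<le> norm (Fw N (\<lambda>i. Xv Z i \<omega>) powr r + 1)"
  proof (rule AE_I2)
    fix \<omega>
    have "Fw N (\<lambda>i. Xv Z i \<omega>) powr a \<le> 1 powr (a - r) * Fw N (\<lambda>i. Xv Z i \<omega>) powr r + 1 powr a"
      using a by (intro powr_split_bound Fw_nonneg) auto
    then show "norm (Fw N (\<lambda>i. Xv Z i \<omega>) powr a) \<le> norm (Fw N (\<lambda>i. Xv Z i \<omega>) powr r + 1)"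
      by simp
  qed
qed

lemma int_V1a:
  assumes a: "0 \<le> a" "a \<le> r"
  shows "integrable M (\<lambda>\<omega>. Fw N (\<lambda>i. Xv Z (i + 1) \<omega>) powr a)"
    and "(\<integral>\<omega>. Fw N (\<lambda>i. Xv Z (i + 1) \<omega>) powr a \<partial>M) = (\<integral>\<omega>. Fw N (\<lambda>i. Xv Z i \<omega>) powr a \<partial>M)"
proof -
  have g: "(\<lambda>t::real. t powr a) \<in> borel_measurable borel" by measurable
  show "integrable M (\<lambda>\<omega>. Fw N (\<lambda>i. Xv Z (i + 1) \<omega>) powr a)"
    using shift_int(1)[OF g, of N 1] int_Va[OF a, of N] by simp
  show "(\<integral>\<omega>. Fw N (\<lambda>i. Xv Z (i + 1) \<omega>) powr a \<partial>M) = (\<integral>\<omega>. Fw N (\<lambda>i. Xv Z i \<omega>) powr a \<partial>M)"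
    using shift_int(2)[OF g, of N 1] by simp
qed


lemmas iprod = indep_prod[OF M indZ Zid]

lemma step:
  "r * (- expectation (Xv Z 0)) * (\<integral>\<omega>. Fw N (\<lambda>i. Xv Z i \<omega>) powr (r - 1) \<partial>M)
   \<le> (r * r * 2 powr r) * expectation (\<lambda>\<omega>. (Xv Z 0 \<omega>)\<^sup>2) * (\<integral>\<omega>. Fw N (\<lambda>i. Xv Z i \<omega>) powr (r - 2) \<partial>M)
     + (r * r * 2 powr r) * expectation (\<lambda>\<omega>. max 0 (Xv Z 0 \<omega>) powr r)"
proof -
  define C where "C = r * r * 2 powr r"
  define V where "V = (\<lambda>\<omega>. Fw N (\<lambda>i. Xv Z i \<omega>))"
  define V' where "V' = (\<lambda>\<omega>. Fw (Suc N) (\<lambda>i. Xv Z i \<omega>))"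
  define W where "W = (\<lambda>\<omega>. Fw N (\<lambda>i. Xv Z (i + 1) \<omega>))"
  define x where "x = Xv Z 0"
  have hm1: "(\<lambda>t::real. t) \<in> borel_measurable borel" by simp
  have hm2: "(\<lambda>t::real. t\<^sup>2) \<in> borel_measurable borel" by measurable
  have gm1: "(\<lambda>t::real. t powr (r - 1)) \<in> borel_measurable borel" by measurable
  have gm2: "(\<lambda>t::real. t powr (r - 2)) \<in> borel_measurable borel" by measurable
  have iW: "integrable M (\<lambda>\<omega>. W \<omega> powr r)" unfolding W_def using int_V1a(1)[of r N] r by auto
  have iW1: "integrable M (\<lambda>\<omega>. W \<omega> powr (r - 1))" unfolding W_def using int_V1a(1)[of "r - 1" N] r by auto
  have iW2: "integrable M (\<lambda>\<omega>. W \<omega> powr (r - 2))" unfolding W_def using int_V1a(1)[of "r - 2" N] r by auto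
  have eW: "(\<integral>\<omega>. W \<omega> powr r \<partial>M) = (\<integral>\<omega>. V \<omega> powr r \<partial>M)"
    unfolding W_def V_def using int_V1a(2)[of r N] r by auto
  have eW1: "(\<integral>\<omega>. W \<omega> powr (r - 1) \<partial>M) = (\<integral>\<omega>. V \<omega> powr (r - 1) \<partial>M)"
    unfolding W_def V_def using int_V1a(2)[of "r - 1" N] r by auto
  have eW2: "(\<integral>\<omega>. W \<omega> powr (r - 2) \<partial>M) = (\<integral>\<omega>. V \<omega> powr (r - 2) \<partial>M)"
    unfolding W_def V_def using int_V1a(2)[of "r - 2" N] r by auto
  have P1: "integrable M (\<lambda>\<omega>. x \<omega> * W \<omega> powr (r - 1))"
    "(\<integral>\<omega>. x \<omega> * W \<omega> powr (r - 1) \<partial>M) = expectation x * (\<integral>\<omega>. W \<omega> powr (r - 1) \<partial>M)"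
    using iprod[OF hm1 gm1, of N] iX iW1 unfolding x_def W_def by auto
  have P2: "integrable M (\<lambda>\<omega>. (x \<omega>)\<^sup>2 * W \<omega> powr (r - 2))"
    "(\<integral>\<omega>. (x \<omega>)\<^sup>2 * W \<omega> powr (r - 2) \<partial>M) = expectation (\<lambda>\<omega>. (x \<omega>)\<^sup>2) * (\<integral>\<omega>. W \<omega> powr (r - 2) \<partial>M)"
    using iprod[OF hm2 gm2, of N] iX2 iW2 unfolding x_def W_def by auto
  have ixp: "integrable M (\<lambda>\<omega>. max 0 (x \<omega>) powr r)" using iXp unfolding x_def .
  define R where "R = (\<lambda>\<omega>. W \<omega> powr r + r * (x \<omega> * W \<omega> powr (r - 1))
         + C * ((x \<omega>)\<^sup>2 * W \<omega> powr (r - 2) + max 0 (x \<omega>) powr r))"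
  have iR: "integrable M R" unfolding R_def using iW P1(1) P2(1) ixp by auto
  have eR: "(\<integral>\<omega>. R \<omega> \<partial>M) = (\<integral>\<omega>. W \<omega> powr r \<partial>M) + r * (expectation x * (\<integral>\<omega>. W \<omega> powr (r - 1) \<partial>M))
      + C * (expectation (\<lambda>\<omega>. (x \<omega>)\<^sup>2) * (\<integral>\<omega>. W \<omega> powr (r - 2) \<partial>M) + expectation (\<lambda>\<omega>. max 0 (x \<omega>) powr r))"
    unfolding R_def using iW P1 P2 ixp
    by (simp add: Bochner_Integration.integral_add integrable_mult_right)
  have iV: "integrable M (\<lambda>\<omega>. V \<omega> powr r)" unfolding V_def by (rule int_V)
  have iV': "integrable M (\<lambda>\<omega>. V' \<omega> powr r)" unfolding V'_def by (rule int_V)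
  have m1: "(\<integral>\<omega>. V \<omega> powr r \<partial>M) \<le> (\<integral>\<omega>. V' \<omega> powr r \<partial>M)"
  proof (intro integral_mono iV iV')
    fix \<omega>
    have "V \<omega> \<le> V' \<omega>" unfolding V_def V'_def by (rule Fw_mono)
    then show "V \<omega> powr r \<le> V' \<omega> powr r" using r by (intro powr_mono2) (auto simp: V_def Fw_nonneg)
  qed
  have m2: "(\<integral>\<omega>. V' \<omega> powr r \<partial>M) \<le> (\<integral>\<omega>. R \<omega> \<partial>M)"
  proof (intro integral_mono iV' iR)
    fix \<omega>
    have "V' \<omega> = max 0 (W \<omega> + x \<omega>)" by (simp add: V'_def W_def x_def add.commute)
    then show "V' \<omega> powr r \<le> R \<omega>"
      using key_ineq[OF r Fw_nonneg, of N "\<lambda>i. Xv Z (i + 1) \<omega>" "x \<omega>"]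
      unfolding R_def C_def W_def by (simp add: algebra_simps)
  qed
  have "r * (- expectation x) * (\<integral>\<omega>. V \<omega> powr (r - 1) \<partial>M)
        \<le> C * expectation (\<lambda>\<omega>. (x \<omega>)\<^sup>2) * (\<integral>\<omega>. V \<omega> powr (r - 2) \<partial>M) + C * expectation (\<lambda>\<omega>. max 0 (x \<omega>) powr r)"
    using m1 m2 eR eW eW1 eW2 by (simp add: algebra_simps)
  then show ?thesis unfolding C_def V_def x_def .
qed

end

lemma enn_powr_SUP:
  fixes g :: "nat \<Rightarrow> real" and p :: real
  assumes g: "\<And>N. g N \<ge> 0" "incseq g" and p: "p > 0"
  shows "enn_powr (SUP N. ennreal (g N)) p \<le> (SUP N. ennreal (g N powr p))"
proof (cases "(SUP N. ennreal (g N)) = \<top>")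
  case True
  have "(SUP N. ennreal (g N powr p)) = \<top>"
  proof (rule ennreal_SUP_eq_top)
    fix n :: nat
    define K where "K = real n powr (1 / p)"
    have "\<exists>i. ennreal K < ennreal (g i)"
    proof (rule ccontr)
      assume "\<not> ?thesis"
      then have "\<And>i. ennreal (g i) \<le> ennreal K" by (simp add: not_less)
      then have "(SUP N. ennreal (g N)) \<le> ennreal K" by (rule SUP_least)
      then have "\<top> \<le> ennreal K" unfolding True .
      then have "ennreal K = \<top>" by (rule top_le)
      then show False by simp
    qed
    then obtain i where i: "ennreal K < ennreal (g i)" by blast
    then have "K < g i" by (subst (asm) ennreal_less_iff) (auto simp: K_def)
    then have "K powr p \<le> g i powr p" using p by (intro powr_mono2) (auto simp: K_def)
    moreover have "K powr p = real n" using p by (simp add: K_def powr_powr)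
    ultimately show "\<exists>i\<in>UNIV. of_nat n \<le> ennreal (g i powr p)"
      by (intro bexI[of _ i]) (auto simp: ennreal_of_nat_eq_real_of_nat)
  qed
  then show ?thesis by (simp only: True) simp
next
  case False
  define c where "c = enn2real (SUP N. ennreal (g N))"
  have S: "(SUP N. ennreal (g N)) = ennreal c" unfolding c_def by (rule ennreal_enn2real[symmetric]) (use False top.not_eq_extremum in blast)
  have c0: "c \<ge> 0" by (simp add: c_def)
  have inc: "incseq (\<lambda>N. ennreal (g N))" using g by (auto simp: incseq_def)
  have "(\<lambda>N. ennreal (g N)) \<longlonglongrightarrow> ennreal c" using LIMSEQ_SUP[OF inc] S by simp
  then have lim: "g \<longlonglongrightarrow> c" using g c0 by simp
  have "(\<lambda>N. g N powr p) \<longlonglongrightarrow> c powr p"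
    using g p by (intro tendsto_powr'[OF lim]) auto
  then have "(\<lambda>N. ennreal (g N powr p)) \<longlonglongrightarrow> ennreal (c powr p)" by (rule tendsto_ennrealI)
  then have "ennreal (c powr p) \<le> (SUP N. ennreal (g N powr p))"
    by (rule LIMSEQ_le_const2) (intro exI[of _ 0] allI impI SUP_upper UNIV_I)
  then show ?thesis using S c0 by (simp add: enn_powr_def)
qed

lemma SUP_partial_Fw: "(SUP m. ennreal (\<Sum>i<m. x i)) = (SUP N. ennreal (Fw N x))"
proof (rule antisym)
  show "(SUP m. ennreal (\<Sum>i<m. x i)) \<le> (SUP N. ennreal (Fw N x))"
  proof (rule SUP_least)
    fix m
    have "ennreal (\<Sum>i<m. x i) \<le> ennreal (Fw m x)" by (intro ennreal_leI Fw_ge) auto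
    then show "ennreal (\<Sum>i<m. x i) \<le> (SUP N. ennreal (Fw N x))" by (rule SUP_upper2[OF UNIV_I])
  qed
  show "(SUP N. ennreal (Fw N x)) \<le> (SUP m. ennreal (\<Sum>i<m. x i))"
  proof (rule SUP_least)
    fix N
    obtain m where "m \<le> N" "Fw N x = (\<Sum>i<m. x i)" using Fw_eq by blast
    then show "ennreal (Fw N x) \<le> (SUP m. ennreal (\<Sum>i<m. x i))" by (auto intro: SUP_upper2)
  qed
qed

definition bndZ :: "real \<Rightarrow> real \<Rightarrow> real \<Rightarrow> real \<Rightarrow> real \<Rightarrow> real" where
  "bndZ rr \<mu> s c p = \<mu> powr (rr - 1 - p) * ((2 / (rr * \<mu>)) *
       ((rr * rr * 2 powr rr) * (s + 1) * (2 * (rr * rr * 2 powr rr) * (s + 1) / (rr * \<mu>)) powr (rr - 2)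
        + (rr * rr * 2 powr rr) * c)) + (1 / \<mu>) powr p"


context
  fixes M :: "'a measure" and Z :: "bool \<times> nat \<Rightarrow> 'a \<Rightarrow> real" and r :: real
  assumes M: "prob_space M"
    and indZ: "prob_space.indep_vars M (\<lambda>_. borel) Z UNIV"
    and Zid: "\<And>b i. distr M borel (Z (b, i)) = distr M borel (Z (b, 0))"
    and r: "r \<ge> 2"
    and iX: "integrable M (Xv Z 0)"
    and iX2: "integrable M (\<lambda>\<omega>. (Xv Z 0 \<omega>)\<^sup>2)"
    and iXp: "integrable M (\<lambda>\<omega>. max 0 (Xv Z 0 \<omega>) powr r)"
    and mu: "prob_space.expectation M (Xv Z 0) < 0"
begin

interpretation prob_space M by (rule M)

lemmas stepZ = step[OF M indZ Zid r iX iX2 iXp]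
lemmas int_VaZ = int_Va[OF M indZ Zid r iX iX2 iXp]
lemmas VmZ [measurable] = V_meas0[OF M indZ Zid]

lemma bound_r1:
  "(\<integral>\<omega>. Fw N (\<lambda>i. Xv Z i \<omega>) powr (r - 1) \<partial>M) \<le>
     (2 / (r * (- expectation (Xv Z 0)))) *
       ((r * r * 2 powr r) * (expectation (\<lambda>\<omega>. (Xv Z 0 \<omega>)\<^sup>2) + 1) *
          (2 * (r * r * 2 powr r) * (expectation (\<lambda>\<omega>. (Xv Z 0 \<omega>)\<^sup>2) + 1) / (r * (- expectation (Xv Z 0)))) powr (r - 2)
        + (r * r * 2 powr r) * expectation (\<lambda>\<omega>. max 0 (Xv Z 0 \<omega>) powr r))"
proof -
  define \<mu> where "\<mu> = - expectation (Xv Z 0)"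
  define s where "s = expectation (\<lambda>\<omega>. (Xv Z 0 \<omega>)\<^sup>2)"
  define c where "c = expectation (\<lambda>\<omega>. max 0 (Xv Z 0 \<omega>) powr r)"
  define C where "C = r * r * 2 powr r"
  define z where "z = (\<integral>\<omega>. Fw N (\<lambda>i. Xv Z i \<omega>) powr (r - 1) \<partial>M)"
  define y where "y = (\<integral>\<omega>. Fw N (\<lambda>i. Xv Z i \<omega>) powr (r - 2) \<partial>M)"
  define L where "L = 2 * C * (s + 1) / (r * \<mu>)"
  have mup: "\<mu> > 0" using mu by (simp add: \<mu>_def)
  have s0: "s \<ge> 0" unfolding s_def by (intro integral_nonneg_AE) auto
  have c0: "c \<ge> 0" unfolding c_def by (intro integral_nonneg_AE) auto
  have Cp: "C > 0" unfolding C_def using r by auto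
  have y0: "y \<ge> 0" unfolding y_def by (intro integral_nonneg_AE) auto
  have z0: "z \<ge> 0" unfolding z_def by (intro integral_nonneg_AE) auto
  have Lp: "L > 0" unfolding L_def using Cp s0 mup r by auto
  have st: "r * \<mu> * z \<le> C * s * y + C * c"
    using stepZ[of N] unfolding \<mu>_def s_def c_def C_def z_def y_def .
  have i1: "integrable M (\<lambda>\<omega>. Fw N (\<lambda>i. Xv Z i \<omega>) powr (r - 1))" using r by (intro int_VaZ) auto
  have i2: "integrable M (\<lambda>\<omega>. Fw N (\<lambda>i. Xv Z i \<omega>) powr (r - 2))" using r by (intro int_VaZ) auto
  have hy: "y \<le> (1 / L) * z + L powr (r - 2)"
  proof -
    have "y \<le> (\<integral>\<omega>. (1 / L) * Fw N (\<lambda>i. Xv Z i \<omega>) powr (r - 1) + L powr (r - 2) \<partial>M)"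
      unfolding y_def
    proof (intro integral_mono i2)
      show "integrable M (\<lambda>\<omega>. (1 / L) * Fw N (\<lambda>i. Xv Z i \<omega>) powr (r - 1) + L powr (r - 2))"
        using i1 by auto
      fix \<omega>
      have "Fw N (\<lambda>i. Xv Z i \<omega>) powr (r - 2) \<le> L powr ((r - 2) - (r - 1)) * Fw N (\<lambda>i. Xv Z i \<omega>) powr (r - 1) + L powr (r - 2)"
        using r Lp by (intro powr_split_bound Fw_nonneg) auto
      moreover have "L powr ((r - 2) - (r - 1)) = 1 / L" using Lp by (simp add: powr_minus_divide)
      ultimately show "Fw N (\<lambda>i. Xv Z i \<omega>) powr (r - 2) \<le> (1 / L) * Fw N (\<lambda>i. Xv Z i \<omega>) powr (r - 1) + L powr (r - 2)"
        by simp
    qed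
    also have "\<dots> = (1 / L) * z + L powr (r - 2)"
      using i1 unfolding z_def by (simp add: Bochner_Integration.integral_add prob_space)
    finally show ?thesis .
  qed
  have "C * s * y \<le> C * (s + 1) * y" using Cp y0 by (intro mult_right_mono) auto
  also have "\<dots> \<le> C * (s + 1) * ((1 / L) * z + L powr (r - 2))"
    using hy Cp s0 by (intro mult_left_mono) auto
  also have "\<dots> = (r * \<mu> / 2) * z + C * (s + 1) * L powr (r - 2)"
  proof -
    have ne: "C * (s + 1) \<noteq> 0" using Cp s0 by auto
    have k: "C * (s + 1) * (1 / L) = r * \<mu> / 2"
      using ne mup r unfolding L_def by (simp add: field_simps)
    have "C * (s + 1) * ((1 / L) * z + L powr (r - 2)) = (C * (s + 1) * (1 / L)) * z + C * (s + 1) * L powr (r - 2)"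
      by (simp only: distrib_left mult.assoc)
    also have "\<dots> = (r * \<mu> / 2) * z + C * (s + 1) * L powr (r - 2)" by (simp only: k)
    finally show ?thesis .
  qed
  finally have "r * \<mu> * z \<le> (r * \<mu> / 2) * z + C * (s + 1) * L powr (r - 2) + C * c" using st by linarith
  moreover have "r * \<mu> * z = 2 * ((r * \<mu> / 2) * z)" by simp
  ultimately have "(r * \<mu> / 2) * z \<le> C * (s + 1) * L powr (r - 2) + C * c" by linarith
  then have "z \<le> (2 / (r * \<mu>)) * (C * (s + 1) * L powr (r - 2) + C * c)"
    using mup r by (simp add: field_simps)
  then show ?thesis unfolding z_def L_def \<mu>_def s_def c_def C_def .
qed


lemma bound_p:
  assumes p: "0 < p" "p \<le> r - 1"
  shows "(\<integral>\<omega>. Fw N (\<lambda>i. Xv Z i \<omega>) powr p \<partial>M) \<le>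
     bndZ r (- expectation (Xv Z 0)) (expectation (\<lambda>\<omega>. (Xv Z 0 \<omega>)\<^sup>2))
          (expectation (\<lambda>\<omega>. max 0 (Xv Z 0 \<omega>) powr r)) p"
proof -
  define \<mu> where "\<mu> = - expectation (Xv Z 0)"
  have mup: "\<mu> > 0" using mu by (simp add: \<mu>_def)
  have i1: "integrable M (\<lambda>\<omega>. Fw N (\<lambda>i. Xv Z i \<omega>) powr (r - 1))" using r by (intro int_VaZ) auto
  have ip: "integrable M (\<lambda>\<omega>. Fw N (\<lambda>i. Xv Z i \<omega>) powr p)" using r p by (intro int_VaZ) auto
  have "(\<integral>\<omega>. Fw N (\<lambda>i. Xv Z i \<omega>) powr p \<partial>M) \<le>
        (\<integral>\<omega>. \<mu> powr (r - 1 - p) * Fw N (\<lambda>i. Xv Z i \<omega>) powr (r - 1) + (1 / \<mu>) powr p \<partial>M)"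
  proof (intro integral_mono ip)
    show "integrable M (\<lambda>\<omega>. \<mu> powr (r - 1 - p) * Fw N (\<lambda>i. Xv Z i \<omega>) powr (r - 1) + (1 / \<mu>) powr p)"
      using i1 by auto
    fix \<omega>
    have "Fw N (\<lambda>i. Xv Z i \<omega>) powr p \<le> (1 / \<mu>) powr (p - (r - 1)) * Fw N (\<lambda>i. Xv Z i \<omega>) powr (r - 1) + (1 / \<mu>) powr p"
      using p mup by (intro powr_split_bound Fw_nonneg) auto
    moreover have "(1 / \<mu>) powr (p - (r - 1)) = \<mu> powr (r - 1 - p)"
      using mup by (simp add: powr_divide powr_minus_divide[symmetric])
    ultimately show "Fw N (\<lambda>i. Xv Z i \<omega>) powr p \<le> \<mu> powr (r - 1 - p) * Fw N (\<lambda>i. Xv Z i \<omega>) powr (r - 1) + (1 / \<mu>) powr p"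
      by simp
  qed
  also have "\<dots> = \<mu> powr (r - 1 - p) * (\<integral>\<omega>. Fw N (\<lambda>i. Xv Z i \<omega>) powr (r - 1) \<partial>M) + (1 / \<mu>) powr p"
    using i1 by (simp add: Bochner_Integration.integral_add prob_space)
  also have "\<dots> \<le> bndZ r (- expectation (Xv Z 0)) (expectation (\<lambda>\<omega>. (Xv Z 0 \<omega>)\<^sup>2))
          (expectation (\<lambda>\<omega>. max 0 (Xv Z 0 \<omega>) powr r)) p"
    unfolding bndZ_def \<mu>_def[symmetric]
    by (intro add_right_mono mult_left_mono) (use bound_r1[of N] in \<open>auto simp: \<mu>_def\<close>)
  finally show ?thesis .
qed

lemma final_Z:
  assumes p: "0 < p" "p \<le> r - 1"
  shows "(\<integral>\<^sup>+\<omega>. enn_powr (SUP m. ennreal (\<Sum>i<m. Xv Z i \<omega>)) p \<partial>M) \<le>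
     ennreal (bndZ r (- expectation (Xv Z 0)) (expectation (\<lambda>\<omega>. (Xv Z 0 \<omega>)\<^sup>2))
          (expectation (\<lambda>\<omega>. max 0 (Xv Z 0 \<omega>) powr r)) p)"
    (is "_ \<le> ennreal ?B")
proof -
  define f where "f = (\<lambda>N \<omega>. ennreal (Fw N (\<lambda>i. Xv Z i \<omega>) powr p))"
  have finc: "incseq f"
    unfolding f_def
  proof (intro monoI le_funI ennreal_leI)
    fix m n :: nat and \<omega> assume "m \<le> n"
    then have "Fw m (\<lambda>i. Xv Z i \<omega>) \<le> Fw n (\<lambda>i. Xv Z i \<omega>)"
    proof (induction n)
      case 0 then show ?case by simp
    next
      case (Suc n)
      show ?case
      proof (cases "m = Suc n")
        case False
        then have "m \<le> n" using Suc.prems by simp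
        then show ?thesis using Suc.IH Fw_mono[of n "\<lambda>i. Xv Z i \<omega>"] by linarith
      qed simp
    qed
    then show "Fw m (\<lambda>i. Xv Z i \<omega>) powr p \<le> Fw n (\<lambda>i. Xv Z i \<omega>) powr p"
      using p by (intro powr_mono2) (auto simp: Fw_nonneg)
  qed
  have fm: "f N \<in> borel_measurable M" for N unfolding f_def by measurable
  have "(\<integral>\<^sup>+\<omega>. enn_powr (SUP m. ennreal (\<Sum>i<m. Xv Z i \<omega>)) p \<partial>M) \<le> (\<integral>\<^sup>+\<omega>. (SUP N. f N \<omega>) \<partial>M)"
  proof (intro nn_integral_mono)
    fix \<omega>
    have "enn_powr (SUP m. ennreal (\<Sum>i<m. Xv Z i \<omega>)) p = enn_powr (SUP N. ennreal (Fw N (\<lambda>i. Xv Z i \<omega>))) p"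
      by (simp only: SUP_partial_Fw)
    also have "\<dots> \<le> (SUP N. f N \<omega>)"
      unfolding f_def
    proof (rule enn_powr_SUP)
      show "incseq (\<lambda>N. Fw N (\<lambda>i. Xv Z i \<omega>))"
        by (rule incseq_SucI) (rule Fw_mono)
    qed (auto simp: Fw_nonneg p)
    finally show "enn_powr (SUP m. ennreal (\<Sum>i<m. Xv Z i \<omega>)) p \<le> (SUP N. f N \<omega>)" .
  qed
  also have "\<dots> = (SUP N. integral\<^sup>N M (f N))"
    by (rule nn_integral_monotone_convergence_SUP[OF finc fm])
  also have "\<dots> \<le> ennreal ?B"
  proof (rule SUP_least)
    fix N
    have ip: "integrable M (\<lambda>\<omega>. Fw N (\<lambda>i. Xv Z i \<omega>) powr p)" using r p by (intro int_VaZ) auto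
    have "integral\<^sup>N M (f N) = ennreal (\<integral>\<omega>. Fw N (\<lambda>i. Xv Z i \<omega>) powr p \<partial>M)"
      unfolding f_def by (rule nn_integral_eq_integral[OF ip]) auto
    also have "\<dots> \<le> ennreal ?B" by (intro ennreal_leI bound_p p)
    finally show "integral\<^sup>N M (f N) \<le> ennreal ?B" .
  qed
  finally show ?thesis .
qed

end

lemma bnd_scale:
  fixes q \<mu> s c p :: real
  assumes q: "q \<ge> 2" and mu: "\<mu> > 0" and s: "s \<ge> 0"
  shows "\<mu> powr p * bndZ q \<mu> s c p =
    (2 / q) * (q * q * 2 powr q) * (s + 1) * (2 * (q * q * 2 powr q) * (s + 1) / q) powr (q - 2)
    + (2 / q) * (q * q * 2 powr q) * c * \<mu> powr (q - 2) + 1"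
proof -
  define C where "C = q * q * 2 powr q"
  define D where "D = 2 * C * (s + 1) / q"
  have Cp: "C > 0" unfolding C_def using q by auto
  have D0: "D \<ge> 0" unfolding D_def using Cp s q by auto
  have e1: "\<mu> powr p * \<mu> powr (q - 1 - p) = \<mu> powr (q - 2) * \<mu>"
  proof -
    have "\<mu> powr p * \<mu> powr (q - 1 - p) = \<mu> powr (q - 1)" by (simp add: powr_add[symmetric])
    also have "\<dots> = \<mu> powr ((q - 2) + 1)" by simp
    also have "\<dots> = \<mu> powr (q - 2) * \<mu> powr 1" by (rule powr_add)
    also have "\<dots> = \<mu> powr (q - 2) * \<mu>" using mu by simp
    finally show ?thesis .
  qed
  have e2: "(2 * C * (s + 1) / (q * \<mu>)) powr (q - 2) = D powr (q - 2) / \<mu> powr (q - 2)"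
  proof -
    have "2 * C * (s + 1) / (q * \<mu>) = D / \<mu>" unfolding D_def using mu q by (simp add: field_simps)
    then show ?thesis using D0 mu by (simp add: powr_divide)
  qed
  have e3: "\<mu> powr p * (1 / \<mu>) powr p = 1" using mu by (simp add: powr_divide powr_zero_eq_one)
  have mq: "\<mu> powr (q - 2) > 0" using mu by simp
  have "\<mu> powr p * bndZ q \<mu> s c p =
        (\<mu> powr p * \<mu> powr (q - 1 - p)) * ((2 / (q * \<mu>)) * (C * (s + 1) * (D powr (q - 2) / \<mu> powr (q - 2)) + C * c))
        + \<mu> powr p * (1 / \<mu>) powr p"
    unfolding bndZ_def C_def[symmetric] e2 by (simp add: algebra_simps)
  also have "\<dots> = (\<mu> powr (q - 2) * \<mu>) * ((2 / (q * \<mu>)) * (C * (s + 1) * (D powr (q - 2) / \<mu> powr (q - 2)) + C * c)) + 1"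
    unfolding e1 e3 ..
  also have "\<dots> = (2 / q) * C * (s + 1) * D powr (q - 2) + (2 / q) * C * c * \<mu> powr (q - 2) + 1"
    using mu mq q by (simp add: field_simps)
  finally show ?thesis unfolding C_def D_def .
qed


definition Kf :: "real \<Rightarrow> real \<Rightarrow> real \<Rightarrow> real" where
  "Kf L Bq q = (2 / q) * (q * q * 2 powr q) * (2 * (1 + Bq) + 2 * L + 1) *
       (2 * (q * q * 2 powr q) * (2 * (1 + Bq) + 2 * L + 1) / q) powr (q - 2)
    + (2 / q) * (q * q * 2 powr q) * Bq * (1 + L) powr (q - 2) + 1"

lemma per_n:
  fixes M :: "'a measure" and A B :: "nat \<Rightarrow> 'a \<Rightarrow> real" and p q L Bq Amin \<rho>0 :: real
  assumes M: "prob_space M"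
    and indep: "prob_space.indep_vars M (\<lambda>_. borel) (\<lambda>(b, i). if b then A i else B i) (UNIV :: (bool \<times> nat) set)"
    and A_id: "\<And>i. distr M borel (A i) = distr M borel (A 0)"
    and B_id: "\<And>i. distr M borel (B i) = distr M borel (B 0)"
    and A_pos: "\<And>i. AE \<omega> in M. A i \<omega> > 0"
    and B_pos: "\<And>i. AE \<omega> in M. B i \<omega> > 0"
    and A_int: "integrable M (A 0)"
    and B_int: "integrable M (B 0)"
    and rho0: "0 < \<rho>0"
    and Amin: "Amin > 0"
    and loads: "\<rho>0 * Amin \<le> \<rho>0 * prob_space.expectation M (A 0)"
               "\<rho>0 * prob_space.expectation M (A 0) \<le> prob_space.expectation M (B 0)"
               "prob_space.expectation M (B 0) < prob_space.expectation M (A 0)"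
    and A_var: "integrable M (\<lambda>\<omega>. (A 0 \<omega>)\<^sup>2)"
    and hL: "prob_space.expectation M (\<lambda>\<omega>. (A 0 \<omega>)\<^sup>2) \<le> L"
    and p: "p > 0"
    and q: "q = max 2 (p + 1)"
    and Bq: "(\<integral>\<^sup>+ \<omega>. ennreal (B 0 \<omega> powr q) \<partial>M) \<le> ennreal Bq" "Bq \<ge> 0"
  shows "ennreal ((1 - prob_space.expectation M (B 0) / prob_space.expectation M (A 0)) powr p) *
            (\<integral>\<^sup>+ \<omega>. enn_powr (workload B A \<omega>) p \<partial>M) \<le> ennreal (Kf L Bq q / Amin powr p)"
proof -
  interpret prob_space M by (rule M)
  define Z where "Z = (\<lambda>(b, i). if b then A i else B i)"
  have indZ: "indep_vars (\<lambda>_. borel) Z UNIV" using indep unfolding Z_def .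
  have Zid: "distr M borel (Z (b, i)) = distr M borel (Z (b, 0))" for b i
    using A_id[of i] B_id[of i] by (cases b) (simp_all add: Z_def)
  have XvZ: "Xv Z i \<omega> = B i \<omega> - A i \<omega>" for i \<omega> by (simp add: Xv_def Z_def)
  have XvZf: "Xv Z 0 = (\<lambda>\<omega>. B 0 \<omega> - A 0 \<omega>)" by (rule ext) (simp add: XvZ)
  have mA[measurable]: "A i \<in> borel_measurable M" for i
    using rvZ[OF M indZ Zid, of "(True, i)"] by (simp add: Z_def)
  have mB[measurable]: "B i \<in> borel_measurable M" for i
    using rvZ[OF M indZ Zid, of "(False, i)"] by (simp add: Z_def)
  have q2: "q \<ge> 2" and pq: "p \<le> q - 1" using q by auto
  have iBq: "integrable M (\<lambda>\<omega>. B 0 \<omega> powr q)"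
  proof (rule integrableI_nonneg)
    show "(\<lambda>\<omega>. B 0 \<omega> powr q) \<in> borel_measurable M" by measurable
    show "AE \<omega> in M. 0 \<le> B 0 \<omega> powr q" by simp
    show "(\<integral>\<^sup>+ \<omega>. ennreal (B 0 \<omega> powr q) \<partial>M) < \<infinity>"
      using Bq(1) by (simp add: le_less_trans)
  qed
  have EBq: "expectation (\<lambda>\<omega>. B 0 \<omega> powr q) \<le> Bq"
  proof -
    have "ennreal (expectation (\<lambda>\<omega>. B 0 \<omega> powr q)) = (\<integral>\<^sup>+ \<omega>. ennreal (B 0 \<omega> powr q) \<partial>M)"
      by (rule nn_integral_eq_integral[OF iBq, symmetric]) simp
    with Bq(1) have "ennreal (expectation (\<lambda>\<omega>. B 0 \<omega> powr q)) \<le> ennreal Bq" by simp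
    then show ?thesis using Bq(2) by (simp add: ennreal_le_iff)
  qed
  have B2le: "AE \<omega> in M. (B 0 \<omega>)\<^sup>2 \<le> B 0 \<omega> powr q + 1"
    using B_pos[of 0]
  proof eventually_elim
    case (elim \<omega>)
    have "B 0 \<omega> powr 2 \<le> 1 powr (2 - q) * B 0 \<omega> powr q + 1 powr 2"
      using elim q2 by (intro powr_split_bound) auto
    then show ?case using elim by (simp add: powr_numeral)
  qed
  have iB2: "integrable M (\<lambda>\<omega>. (B 0 \<omega>)\<^sup>2)"
  proof (rule Bochner_Integration.integrable_bound)
    show "integrable M (\<lambda>\<omega>. B 0 \<omega> powr q + 1)" using iBq by auto
    show "(\<lambda>\<omega>. (B 0 \<omega>)\<^sup>2) \<in> borel_measurable M" by measurable
    show "AE \<omega> in M. norm ((B 0 \<omega>)\<^sup>2) \<le> norm (B 0 \<omega> powr q + 1)"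
      using B2le by eventually_elim simp
  qed
  have EB2: "expectation (\<lambda>\<omega>. (B 0 \<omega>)\<^sup>2) \<le> Bq + 1"
  proof -
    have "expectation (\<lambda>\<omega>. (B 0 \<omega>)\<^sup>2) \<le> expectation (\<lambda>\<omega>. B 0 \<omega> powr q + 1)"
      using B2le iB2 iBq by (intro integral_mono_AE) auto
    also have "\<dots> = expectation (\<lambda>\<omega>. B 0 \<omega> powr q) + 1"
      using iBq by (simp add: Bochner_Integration.integral_add prob_space)
    finally show ?thesis using EBq by linarith
  qed
  have X2le: "(B 0 \<omega> - A 0 \<omega>)\<^sup>2 \<le> 2 * (B 0 \<omega>)\<^sup>2 + 2 * (A 0 \<omega>)\<^sup>2" for \<omega>
  proof -
    have "2 * (B 0 \<omega>)\<^sup>2 + 2 * (A 0 \<omega>)\<^sup>2 - (B 0 \<omega> - A 0 \<omega>)\<^sup>2 = (B 0 \<omega> + A 0 \<omega>)\<^sup>2"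
      by (simp add: power2_eq_square algebra_simps)
    moreover have "0 \<le> (B 0 \<omega> + A 0 \<omega>)\<^sup>2" by simp
    ultimately show ?thesis by linarith
  qed
  have iX2: "integrable M (\<lambda>\<omega>. (Xv Z 0 \<omega>)\<^sup>2)"
  proof (rule Bochner_Integration.integrable_bound)
    show "integrable M (\<lambda>\<omega>. 2 * (B 0 \<omega>)\<^sup>2 + 2 * (A 0 \<omega>)\<^sup>2)" using iB2 A_var by auto
    show "(\<lambda>\<omega>. (Xv Z 0 \<omega>)\<^sup>2) \<in> borel_measurable M" unfolding XvZf by measurable
    show "AE \<omega> in M. norm ((Xv Z 0 \<omega>)\<^sup>2) \<le> norm (2 * (B 0 \<omega>)\<^sup>2 + 2 * (A 0 \<omega>)\<^sup>2)"
      using X2le by (auto simp: XvZ)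
  qed
  have sle: "expectation (\<lambda>\<omega>. (Xv Z 0 \<omega>)\<^sup>2) \<le> 2 * (1 + Bq) + 2 * L"
  proof -
    have "expectation (\<lambda>\<omega>. (Xv Z 0 \<omega>)\<^sup>2) \<le> expectation (\<lambda>\<omega>. 2 * (B 0 \<omega>)\<^sup>2 + 2 * (A 0 \<omega>)\<^sup>2)"
      using iX2 iB2 A_var X2le by (intro integral_mono) (auto simp: XvZ)
    also have "\<dots> = 2 * expectation (\<lambda>\<omega>. (B 0 \<omega>)\<^sup>2) + 2 * expectation (\<lambda>\<omega>. (A 0 \<omega>)\<^sup>2)"
      using iB2 A_var by (simp add: Bochner_Integration.integral_add)
    finally have "expectation (\<lambda>\<omega>. (Xv Z 0 \<omega>)\<^sup>2) \<le> 2 * expectation (\<lambda>\<omega>. (B 0 \<omega>)\<^sup>2) + 2 * expectation (\<lambda>\<omega>. (A 0 \<omega>)\<^sup>2)" .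
    moreover have "2 * expectation (\<lambda>\<omega>. (B 0 \<omega>)\<^sup>2) \<le> 2 * (1 + Bq)" using EB2 by simp
    moreover have "2 * expectation (\<lambda>\<omega>. (A 0 \<omega>)\<^sup>2) \<le> 2 * L" using hL by simp
    ultimately show ?thesis by linarith
  qed
  have s0: "expectation (\<lambda>\<omega>. (Xv Z 0 \<omega>)\<^sup>2) \<ge> 0" by (intro integral_nonneg_AE) auto
  have Xple: "AE \<omega> in M. max 0 (Xv Z 0 \<omega>) powr q \<le> B 0 \<omega> powr q"
    using A_pos[of 0] B_pos[of 0]
  proof eventually_elim
    case (elim \<omega>)
    then show ?case using q2 by (intro powr_mono2) (auto simp: XvZ)
  qed
  have iXp: "integrable M (\<lambda>\<omega>. max 0 (Xv Z 0 \<omega>) powr q)"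
  proof (rule Bochner_Integration.integrable_bound)
    show "integrable M (\<lambda>\<omega>. B 0 \<omega> powr q)" by (rule iBq)
    show "(\<lambda>\<omega>. max 0 (Xv Z 0 \<omega>) powr q) \<in> borel_measurable M" unfolding XvZf by measurable
    show "AE \<omega> in M. norm (max 0 (Xv Z 0 \<omega>) powr q) \<le> norm (B 0 \<omega> powr q)"
      using Xple by eventually_elim simp
  qed
  have cle: "expectation (\<lambda>\<omega>. max 0 (Xv Z 0 \<omega>) powr q) \<le> Bq"
  proof -
    have "expectation (\<lambda>\<omega>. max 0 (Xv Z 0 \<omega>) powr q) \<le> expectation (\<lambda>\<omega>. B 0 \<omega> powr q)"
      using Xple iXp iBq by (intro integral_mono_AE) auto
    then show ?thesis using EBq by linarith
  qed
  have c0: "expectation (\<lambda>\<omega>. max 0 (Xv Z 0 \<omega>) powr q) \<ge> 0" by (intro integral_nonneg_AE) auto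
  define a where "a = expectation (A 0)"
  define b where "b = expectation (B 0)"
  have iX: "integrable M (Xv Z 0)" unfolding XvZf using A_int B_int by auto
  have EX: "expectation (Xv Z 0) = b - a" unfolding XvZf a_def b_def using A_int B_int by simp
  have aAmin: "Amin \<le> a" using loads(1) rho0 unfolding a_def by simp
  have apos: "a > 0" using aAmin Amin by linarith
  have bpos: "b > 0"
  proof -
    have "\<rho>0 * a > 0" using rho0 apos by simp
    then show ?thesis using loads(2) unfolding a_def[symmetric] b_def[symmetric] by linarith
  qed
  have ab: "b < a" using loads(3) unfolding a_def b_def .
  have ale: "a \<le> 1 + L"
  proof -
    have "a \<le> expectation (\<lambda>\<omega>. 1 + (A 0 \<omega>)\<^sup>2)" unfolding a_def
    proof (intro integral_mono A_int)
      show "integrable M (\<lambda>\<omega>. 1 + (A 0 \<omega>)\<^sup>2)" using A_var by auto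
      fix \<omega>
      have "(A 0 \<omega> - 1)\<^sup>2 = (A 0 \<omega>)\<^sup>2 - 2 * A 0 \<omega> + 1" by (simp add: power2_eq_square algebra_simps)
      moreover have "0 \<le> (A 0 \<omega> - 1)\<^sup>2" "0 \<le> (A 0 \<omega>)\<^sup>2" by simp_all
      ultimately show "A 0 \<omega> \<le> 1 + (A 0 \<omega>)\<^sup>2" by linarith
    qed
    also have "\<dots> = 1 + expectation (\<lambda>\<omega>. (A 0 \<omega>)\<^sup>2)"
      using A_var by (simp add: Bochner_Integration.integral_add prob_space)
    finally show ?thesis using hL by linarith
  qed
  define \<mu> where "\<mu> = a - b"
  have mup: "\<mu> > 0" using ab by (simp add: \<mu>_def)
  have mule: "\<mu> \<le> 1 + L" using ale bpos by (simp add: \<mu>_def)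
  have mu: "expectation (Xv Z 0) < 0" using EX ab by simp
  have core: "(\<integral>\<^sup>+\<omega>. enn_powr (SUP m. ennreal (\<Sum>i<m. Xv Z i \<omega>)) p \<partial>M) \<le>
     ennreal (bndZ q (- expectation (Xv Z 0)) (expectation (\<lambda>\<omega>. (Xv Z 0 \<omega>)\<^sup>2))
          (expectation (\<lambda>\<omega>. max 0 (Xv Z 0 \<omega>) powr q)) p)"
    by (rule final_Z[OF M indZ Zid q2 iX iX2 iXp mu p pq])
  define s where "s = expectation (\<lambda>\<omega>. (Xv Z 0 \<omega>)\<^sup>2)"
  define c where "c = expectation (\<lambda>\<omega>. max 0 (Xv Z 0 \<omega>) powr q)"
  have muE: "- expectation (Xv Z 0) = \<mu>" using EX by (simp add: \<mu>_def)
  have wl: "workload B A \<omega> = (SUP m. ennreal (\<Sum>i<m. Xv Z i \<omega>))" for \<omega>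
    by (simp add: workload_def XvZ)
  have core': "(\<integral>\<^sup>+\<omega>. enn_powr (workload B A \<omega>) p \<partial>M) \<le> ennreal (bndZ q \<mu> s c p)"
    using core unfolding wl muE s_def[symmetric] c_def[symmetric] .
  define C where "C = q * q * 2 powr q"
  define S where "S = 2 * (1 + Bq) + 2 * L + 1"
  have Cp: "C > 0" unfolding C_def using q2 by auto
  have L0: "L \<ge> 0"
  proof -
    have "0 \<le> expectation (\<lambda>\<omega>. (A 0 \<omega>)\<^sup>2)" by (intro integral_nonneg_AE) auto
    then show ?thesis using hL by linarith
  qed
  have sS: "s + 1 \<le> S" using sle unfolding S_def s_def by linarith
  have s0': "s \<ge> 0" using s0 unfolding s_def .
  have c0': "c \<ge> 0" using c0 unfolding c_def .
  have cle': "c \<le> Bq" using cle unfolding c_def .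
  have sc: "\<mu> powr p * bndZ q \<mu> s c p =
    (2 / q) * C * (s + 1) * (2 * C * (s + 1) / q) powr (q - 2) + (2 / q) * C * c * \<mu> powr (q - 2) + 1"
    unfolding C_def by (rule bnd_scale[OF q2 mup s0'])
  have t1: "(2 / q) * C * (s + 1) * (2 * C * (s + 1) / q) powr (q - 2) \<le> (2 / q) * C * S * (2 * C * S / q) powr (q - 2)"
  proof -
    have "(2 * C * (s + 1) / q) powr (q - 2) \<le> (2 * C * S / q) powr (q - 2)"
      using sS s0' Cp q2 by (intro powr_mono2 divide_right_mono mult_left_mono) auto
    moreover have "(2 / q) * C * (s + 1) \<le> (2 / q) * C * S"
      using sS Cp q2 by (intro mult_left_mono) auto
    moreover have "0 \<le> 2 * C * S / q" using sS s0' Cp q2 by auto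
    ultimately show ?thesis using s0' Cp q2 sS by (intro mult_mono) auto
  qed
  have t2: "(2 / q) * C * c * \<mu> powr (q - 2) \<le> (2 / q) * C * Bq * (1 + L) powr (q - 2)"
  proof -
    have "\<mu> powr (q - 2) \<le> (1 + L) powr (q - 2)" using mule mup q2 by (intro powr_mono2) auto
    moreover have "(2 / q) * C * c \<le> (2 / q) * C * Bq" using cle' Cp q2 by (intro mult_left_mono) auto
    ultimately show ?thesis using c0' Cp q2 Bq(2) cle' by (intro mult_mono) auto
  qed
  have KK: "\<mu> powr p * bndZ q \<mu> s c p \<le> Kf L Bq q"
    using sc t1 t2 unfolding Kf_def C_def[symmetric] S_def[symmetric] by linarith
  have bnd0: "0 \<le> \<mu> powr p * bndZ q \<mu> s c p"
    unfolding sc using Cp q2 s0' c0' by (intro add_nonneg_nonneg mult_nonneg_nonneg) auto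
  have bndZ0: "0 \<le> bndZ q \<mu> s c p"
  proof -
    have "\<mu> powr p > 0" using mup by simp
    then show ?thesis using bnd0 by (simp add: zero_le_mult_iff)
  qed
  have rho: "1 - b / a = \<mu> / a" using apos by (simp add: \<mu>_def field_simps)
  have "ennreal ((1 - b / a) powr p) * (\<integral>\<^sup>+ \<omega>. enn_powr (workload B A \<omega>) p \<partial>M)
        \<le> ennreal ((1 - b / a) powr p) * ennreal (bndZ q \<mu> s c p)"
    by (intro mult_left_mono core') auto
  also have "\<dots> = ennreal ((1 - b / a) powr p * bndZ q \<mu> s c p)"
    using bndZ0 by (simp add: ennreal_mult)
  also have "\<dots> \<le> ennreal (Kf L Bq q / Amin powr p)"
  proof (rule ennreal_leI)
    have "(1 - b / a) powr p * bndZ q \<mu> s c p = (\<mu> powr p * bndZ q \<mu> s c p) / a powr p"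
      unfolding rho using mup apos by (simp add: powr_divide)
    also have "\<dots> \<le> (\<mu> powr p * bndZ q \<mu> s c p) / Amin powr p"
      using bnd0 aAmin Amin p by (intro divide_left_mono powr_mono2 mult_pos_pos) auto
    also have "\<dots> \<le> Kf L Bq q / Amin powr p"
      using KK Amin by (intro divide_right_mono) auto
    finally show "(1 - b / a) powr p * bndZ q \<mu> s c p \<le> Kf L Bq q / Amin powr p" .
  qed
  finally show ?thesis unfolding a_def b_def .
qed

theorem lemma2:
  fixes M :: "'a measure"
    and A B :: "nat \<Rightarrow> nat \<Rightarrow> 'a \<Rightarrow> real"
    and \<rho> :: "nat \<Rightarrow> real"
    and \<rho>0 Amin \<delta> \<gamma> p q :: real
  assumes M: "prob_space M"
    and indep: "\<And>n. prob_space.indep_vars M (\<lambda>_. borel)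
                  (\<lambda>(b, i). if b then A n i else B n i) (UNIV :: (bool \<times> nat) set)"
    and A_id: "\<And>n i. distr M borel (A n i) = distr M borel (A n 0)"
    and B_id: "\<And>n i. distr M borel (B n i) = distr M borel (B n 0)"
    and A_pos: "\<And>n i. AE \<omega> in M. A n i \<omega> > 0"
    and B_pos: "\<And>n i. AE \<omega> in M. B n i \<omega> > 0"
    and A_int: "\<And>n. integrable M (A n 0)"
    and B_int: "\<And>n. integrable M (B n 0)"
    and rho_def: "\<And>n. \<rho> n = prob_space.expectation M (B n 0) / prob_space.expectation M (A n 0)"
    and rho0: "0 < \<rho>0" "\<rho>0 < 1"
    and Amin: "Amin > 0"
    and loads: "\<And>n. \<rho>0 * Amin \<le> \<rho>0 * prob_space.expectation M (A n 0)"
               "\<And>n. \<rho>0 * prob_space.expectation M (A n 0) \<le> prob_space.expectation M (B n 0)"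
               "\<And>n. prob_space.expectation M (B n 0) < prob_space.expectation M (A n 0)"
    and rho_lim: "\<rho> \<longlonglongrightarrow> 1"
    and A_var: "\<And>n. integrable M (\<lambda>\<omega>. (A n 0 \<omega>)\<^sup>2)"
    and A_sq: "limsup (\<lambda>n. ereal (prob_space.expectation M (\<lambda>\<omega>. (A n 0 \<omega>)\<^sup>2))) < \<infinity>"
    and delta_gamma: "\<delta> > 0" "\<gamma> > 0"
      "\<And>n. measure M {\<omega> \<in> space M. B n 0 \<omega> - A n 0 \<omega> \<ge> \<delta>} \<ge> \<gamma>"
    and p: "p > 0"
    and q: "q = max 2 (p + 1)"
    and B_mom: "(SUP n. \<integral>\<^sup>+ \<omega>. ennreal (B n 0 \<omega> powr q) \<partial>M) < \<infinity>"
  shows "limsup (\<lambda>n. ennreal ((1 - \<rho> n) powr p) *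
            (\<integral>\<^sup>+ \<omega>. enn_powr (workload (B n) (A n) \<omega>) p \<partial>M)) < \<infinity>"
proof -
  interpret prob_space M by (rule M)
  have q2: "q \<ge> 2" and pq: "p \<le> q - 1" using q by auto
  have "limsup (\<lambda>n. ereal (expectation (\<lambda>\<omega>. (A n 0 \<omega>)\<^sup>2))) \<noteq> \<infinity>" using A_sq by simp
  then obtain k :: nat where k: "limsup (\<lambda>n. ereal (expectation (\<lambda>\<omega>. (A n 0 \<omega>)\<^sup>2))) < ereal (real k)"
    using less_PInf_Ex_of_nat by blast
  have evL: "eventually (\<lambda>n. ereal (expectation (\<lambda>\<omega>. (A n 0 \<omega>)\<^sup>2)) < ereal (real k)) sequentially"
    by (rule Limsup_lessD[OF k])
  define Sup where "Sup = (SUP n. \<integral>\<^sup>+ \<omega>. ennreal (B n 0 \<omega> powr q) \<partial>M)"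
  define Bq where "Bq = enn2real Sup"
  have SupB: "Sup = ennreal Bq" unfolding Bq_def using B_mom unfolding Sup_def[symmetric]
    by (intro ennreal_enn2real[symmetric]) simp
  have Bq0: "Bq \<ge> 0" unfolding Bq_def by simp
  have Bqn: "(\<integral>\<^sup>+ \<omega>. ennreal (B n 0 \<omega> powr q) \<partial>M) \<le> ennreal Bq" for n
    unfolding SupB[symmetric] Sup_def by (rule SUP_upper) simp
  define K where "K = Kf (real k) Bq q / Amin powr p"
  have ev: "eventually (\<lambda>n. ennreal ((1 - \<rho> n) powr p) *
            (\<integral>\<^sup>+ \<omega>. enn_powr (workload (B n) (A n) \<omega>) p \<partial>M) \<le> ennreal K) sequentially"
    using evL
  proof eventually_elim
    case (elim n)
    then have hL: "expectation (\<lambda>\<omega>. (A n 0 \<omega>)\<^sup>2) \<le> real k" by simp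
    show ?case
      unfolding rho_def K_def
      by (rule per_n[OF M indep[of n] A_id[of n] B_id[of n] A_pos[of n] B_pos[of n] A_int[of n] B_int[of n]
            rho0(1) Amin loads(1)[of n] loads(2)[of n] loads(3)[of n] A_var[of n] hL p q Bqn Bq0])
  qed
  have "limsup (\<lambda>n. ennreal ((1 - \<rho> n) powr p) *
            (\<integral>\<^sup>+ \<omega>. enn_powr (workload (B n) (A n) \<omega>) p \<partial>M)) \<le> ennreal K"
    by (rule Limsup_bounded[OF ev])
  also have "\<dots> < \<infinity>" by simp
  finally show ?thesis .
qed

end
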